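(* For a positive integer $n$, let $D_n$ be the tournament on vertex set $\{v_1,\ldots,v_n\}$ in which, for $1\le i<j\le n$ with $(i,j)\neq(1,n)$, the edge between $v_i$ and $v_j$ is directed from $v_i$ to $v_j$, and the edge between $v_1$ and $v_n$ is directed from $v_n$ to $v_1$. Then for all positive integers $n,k$ (with $n\ge 2$), $P_{v_1\approx v_n}(D_n;k)=k(k-1)^{n-2}$, $P_{v_1\not\approx v_n}(D_n;k)=k^{n-1}(k-1)$, and consequently $P(D_n;k)=k(k-1)^{n-2}+k^{n-1}(k-1)$.
   Context: For a positive integer $k$, a proper $k$-coloring of a digraph $D$ is a map $c:V(D)\to\{1,\ldots,k\}$ such that each color class induces a subdigraph with no directed cycle; $P(D;k)$ is the number of proper $k$-colorings. For vertices $u,v$, $P_{u\approx v}(D;k)$ is the number of proper $k$-colorings in which $u$ and $v$ receive the same color, and $P_{u\not\approx v}(D;k)$ the number in which they receive different colors. *)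

theory Defs
  imports Main "HOL-Library.FuncSet"
begin

definition proper_colorings :: "'a set \<Rightarrow> ('a \<times> 'a) set \<Rightarrow> nat \<Rightarrow> ('a \<Rightarrow> nat) set" where
  "proper_colorings V E k =
     {c \<in> V \<rightarrow>\<^sub>E {1..k}. \<forall>i \<in> {1..k}. acyclic (E \<inter> ({v \<in> V. c v = i} \<times> {v \<in> V. c v = i}))}"

definition P_chrom :: "'a set \<Rightarrow> ('a \<times> 'a) set \<Rightarrow> nat \<Rightarrow> nat" where
  "P_chrom V E k = card (proper_colorings V E k)"

definition P_same :: "'a set \<Rightarrow> ('a \<times> 'a) set \<Rightarrow> 'a \<Rightarrow> 'a \<Rightarrow> nat \<Rightarrow> nat" where
  "P_same V E u v k = card {c \<in> proper_colorings V E k. c u = c v}"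

definition P_diff :: "'a set \<Rightarrow> ('a \<times> 'a) set \<Rightarrow> 'a \<Rightarrow> 'a \<Rightarrow> nat \<Rightarrow> nat" where
  "P_diff V E u v k = card {c \<in> proper_colorings V E k. c u \<noteq> c v}"

definition Dn_vertices :: "nat \<Rightarrow> nat set" where
  "Dn_vertices n = {1..n}"

definition Dn_arcs :: "nat \<Rightarrow> (nat \<times> nat) set" where
  "Dn_arcs n = {(i, j). 1 \<le> i \<and> i < j \<and> j \<le> n \<and> (i, j) \<noteq> (1, n)} \<union> {(n, 1)}"

end

theory Submission
  imports Defs
begin

lemma acyc_less: "acyclic {(a, b). (a::nat) < b}"
  by (rule wf_acyclic) (rule wf_less)

lemma proper_iff:
  assumes n2: "n \<ge> 2" and c: "c \<in> {1..n} \<rightarrow>\<^sub>E {1..k}"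
  shows "c \<in> proper_colorings (Dn_vertices n) (Dn_arcs n) k \<longleftrightarrow>
         (c 1 = c n \<longrightarrow> (\<forall>j. 1 < j \<and> j < n \<longrightarrow> c j \<noteq> c 1))"
proof
  assume p: "c \<in> proper_colorings (Dn_vertices n) (Dn_arcs n) k"
  show "c 1 = c n \<longrightarrow> (\<forall>j. 1 < j \<and> j < n \<longrightarrow> c j \<noteq> c 1)"
  proof (intro impI allI notI)
    fix j assume e: "c 1 = c n" and j: "1 < j \<and> j < n" and cj: "c j = c 1"
    let ?S = "{v \<in> Dn_vertices n. c v = c 1}"
    let ?R = "Dn_arcs n \<inter> (?S \<times> ?S)"
    have c1: "c 1 \<in> {1..k}" using c n2 by auto
    have ac: "acyclic ?R" using p c1 unfolding proper_colorings_def by blast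
    have "(1, j) \<in> ?R" "(j, n) \<in> ?R" "(n, 1) \<in> ?R"
      using j e cj n2 by (auto simp: Dn_arcs_def Dn_vertices_def)
    hence "(1, 1) \<in> ?R\<^sup>+"
      by (meson trancl.r_into_trancl trancl.trancl_into_trancl)
    thus False using ac unfolding acyclic_def by blast
  qed
next
  assume h: "c 1 = c n \<longrightarrow> (\<forall>j. 1 < j \<and> j < n \<longrightarrow> c j \<noteq> c 1)"
  show "c \<in> proper_colorings (Dn_vertices n) (Dn_arcs n) k"
    unfolding proper_colorings_def
  proof (intro CollectI conjI ballI)
    show "c \<in> Dn_vertices n \<rightarrow>\<^sub>E {1..k}" using c by (simp add: Dn_vertices_def)
  next
    fix i assume "i \<in> {1..k}"
    let ?S = "{v \<in> Dn_vertices n. c v = i}"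
    show "acyclic (Dn_arcs n \<inter> (?S \<times> ?S))"
    proof (cases "c 1 = i \<and> c n = i")
      case True
      have "Dn_arcs n \<inter> (?S \<times> ?S) \<subseteq> {(n, 1)}"
      proof
        fix x assume x: "x \<in> Dn_arcs n \<inter> (?S \<times> ?S)"
        obtain a b where ab: "x = (a, b)" by fastforce
        have "a \<in> {1, n}" "b \<in> {1, n}"
          using x h True ab n2 by (auto simp: Dn_vertices_def) (metis le_neq_implies_less)+
        thus "x \<in> {(n, 1)}" using x ab n2 by (auto simp: Dn_arcs_def)
      qed
      moreover have "acyclic {(n, 1::nat)}"
      proof -
        have "acyclic ({}::(nat\<times>nat) set)" by (simp add: acyclic_def)
        thus ?thesis using n2 by (subst acyclic_insert) auto
      qed
      ultimately show ?thesis by (rule acyclic_subset[rotated])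
    next
      case False
      have "Dn_arcs n \<inter> (?S \<times> ?S) \<subseteq> {(a, b). a < b}"
        using False by (auto simp: Dn_arcs_def Dn_vertices_def)
      thus ?thesis using acyc_less acyclic_subset by blast
    qed
  qed
qed

lemma proper_iff2:
  assumes n2: "n \<ge> 2"
  shows "c \<in> proper_colorings (Dn_vertices n) (Dn_arcs n) k \<longleftrightarrow>
         c \<in> {1..n} \<rightarrow>\<^sub>E {1..k} \<and> (c 1 = c n \<longrightarrow> (\<forall>j. 1 < j \<and> j < n \<longrightarrow> c j \<noteq> c 1))"
  using proper_iff[OF n2] unfolding proper_colorings_def Dn_vertices_def by blast

lemma same_eq:
  assumes n2: "n \<ge> 2"
  shows "{c \<in> proper_colorings (Dn_vertices n) (Dn_arcs n) k. c 1 = c n} =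
    (\<Union>a\<in>{1..k}. PiE {1..n} (\<lambda>v. if v = 1 \<or> v = n then {a} else {1..k} - {a}))"
proof (intro equalityI subsetI)
  fix c assume "c \<in> {c \<in> proper_colorings (Dn_vertices n) (Dn_arcs n) k. c 1 = c n}"
  hence c: "c \<in> {1..n} \<rightarrow>\<^sub>E {1..k}" "c 1 = c n" "\<forall>j. 1 < j \<and> j < n \<longrightarrow> c j \<noteq> c 1"
    using proper_iff2[OF n2] by auto
  have "c 1 \<in> {1..k}" using c(1) n2 by auto
  moreover have "c \<in> PiE {1..n} (\<lambda>v. if v = 1 \<or> v = n then {c 1} else {1..k} - {c 1})"
    using c by (auto simp: PiE_iff)
  ultimately show "c \<in> (\<Union>a\<in>{1..k}. PiE {1..n} (\<lambda>v. if v = 1 \<or> v = n then {a} else {1..k} - {a}))"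
    by blast
next
  fix c assume "c \<in> (\<Union>a\<in>{1..k}. PiE {1..n} (\<lambda>v. if v = 1 \<or> v = n then {a} else {1..k} - {a}))"
  then obtain a where a: "a \<in> {1..k}" and c: "c \<in> PiE {1..n} (\<lambda>v. if v = 1 \<or> v = n then {a} else {1..k} - {a})"
    by blast
  have c1: "c 1 = a" "c n = a" using PiE_mem[OF c, of 1] PiE_mem[OF c, of n] n2 by auto
  have "c \<in> {1..n} \<rightarrow>\<^sub>E {1..k}" using c a by (auto simp: PiE_iff split: if_splits)
  moreover have "\<forall>j. 1 < j \<and> j < n \<longrightarrow> c j \<noteq> c 1"
  proof (intro allI impI)
    fix j assume j: "1 < j \<and> j < n"
    hence "c j \<in> {1..k} - {a}" using PiE_mem[OF c, of j] by auto
    thus "c j \<noteq> c 1" using c1 by auto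
  qed
  ultimately show "c \<in> {c \<in> proper_colorings (Dn_vertices n) (Dn_arcs n) k. c 1 = c n}"
    using proper_iff2[OF n2] c1 by auto
qed

lemma diff_eq:
  assumes n2: "n \<ge> 2"
  shows "{c \<in> proper_colorings (Dn_vertices n) (Dn_arcs n) k. c 1 \<noteq> c n} =
    (\<Union>a\<in>{1..k}. \<Union>b\<in>{1..k} - {a}. PiE {1..n} (\<lambda>v. if v = 1 then {a} else if v = n then {b} else {1..k}))"
proof (intro equalityI subsetI)
  fix c assume "c \<in> {c \<in> proper_colorings (Dn_vertices n) (Dn_arcs n) k. c 1 \<noteq> c n}"
  hence c: "c \<in> {1..n} \<rightarrow>\<^sub>E {1..k}" "c 1 \<noteq> c n"
    using proper_iff2[OF n2] by auto
  have "c 1 \<in> {1..k}" "c n \<in> {1..k} - {c 1}" using c n2 by auto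
  moreover have "c \<in> PiE {1..n} (\<lambda>v. if v = 1 then {c 1} else if v = n then {c n} else {1..k})"
    using c by (auto simp: PiE_iff)
  ultimately show "c \<in> (\<Union>a\<in>{1..k}. \<Union>b\<in>{1..k} - {a}. PiE {1..n} (\<lambda>v. if v = 1 then {a} else if v = n then {b} else {1..k}))"
    by blast
next
  fix c assume "c \<in> (\<Union>a\<in>{1..k}. \<Union>b\<in>{1..k} - {a}. PiE {1..n} (\<lambda>v. if v = 1 then {a} else if v = n then {b} else {1..k}))"
  then obtain a b where a: "a \<in> {1..k}" "b \<in> {1..k} - {a}" and
    c: "c \<in> PiE {1..n} (\<lambda>v. if v = 1 then {a} else if v = n then {b} else {1..k})"
    by blast
  have c1: "c 1 = a" "c n = b" using PiE_mem[OF c, of 1] PiE_mem[OF c, of n] n2 by auto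
  have "c \<in> {1..n} \<rightarrow>\<^sub>E {1..k}" using c a by (auto simp: PiE_iff split: if_splits)
  thus "c \<in> {c \<in> proper_colorings (Dn_vertices n) (Dn_arcs n) k. c 1 \<noteq> c n}"
    using proper_iff2[OF n2] c1 a by auto
qed


lemma prod_mid:
  assumes n2: "n \<ge> 2" and f1: "f 1 = 1" and fn: "f n = 1"
    and fj: "\<And>j. 1 < j \<Longrightarrow> j < n \<Longrightarrow> f j = (x::nat)"
  shows "prod f {1..n} = x ^ (n - 2)"
proof -
  have U: "{1..n} = {1, n} \<union> {2..n-1}" using n2 by auto
  have "prod f {1..n} = prod f {1, n} * prod f {2..n-1}"
    unfolding U by (rule prod.union_disjoint) auto
  also have "prod f {1, n} = 1" using n2 f1 fn by simp
  also have "prod f {2..n-1} = prod (\<lambda>_. x) {2..n-1}"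
    by (rule prod.cong) (auto intro: fj)
  also have "\<dots> = x ^ (n - 2)" using n2 by simp
  finally show ?thesis by simp
qed

lemma card_same:
  assumes n2: "n \<ge> 2"
  shows "card (\<Union>a\<in>{1..k}. PiE {1..n} (\<lambda>v. if v = 1 \<or> v = n then {a} else {1..k} - {a}))
     = k * (k - 1) ^ (n - 2)"
proof -
  have "card (\<Union>a\<in>{1..k}. PiE {1..n} (\<lambda>v. if v = 1 \<or> v = n then {a} else {1..k} - {a}))
     = (\<Sum>a\<in>{1..k}. card (PiE {1..n} (\<lambda>v. if v = 1 \<or> v = n then {a} else {1..k} - {a})))"
  proof (rule card_UN_disjoint)
    show "\<forall>i\<in>{1..k}. \<forall>j\<in>{1..k}. i \<noteq> j \<longrightarrow>
      PiE {1..n} (\<lambda>v. if v = 1 \<or> v = n then {i} else {1..k} - {i}) \<inter>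
      PiE {1..n} (\<lambda>v. if v = 1 \<or> v = n then {j} else {1..k} - {j}) = {}"
    proof (intro ballI impI equalityI subsetI)
      fix i j c assume ij: "i \<noteq> j" and c: "c \<in> PiE {1..n} (\<lambda>v. if v = 1 \<or> v = n then {i} else {1..k} - {i}) \<inter>
      PiE {1..n} (\<lambda>v. if v = 1 \<or> v = n then {j} else {1..k} - {j})"
      hence "c 1 = i" "c 1 = j" using n2 PiE_mem[OF IntD1[OF c], of 1] PiE_mem[OF IntD2[OF c], of 1] by auto
      thus "c \<in> {}" using ij by simp
    qed auto
  qed (auto intro!: finite_PiE)
  also have "\<dots> = (\<Sum>a\<in>{1..k}. (k - 1) ^ (n - 2))"
  proof (rule sum.cong)
    fix a assume a: "a \<in> {1..k}"
    show "card (PiE {1..n} (\<lambda>v. if v = 1 \<or> v = n then {a} else {1..k} - {a})) = (k - 1) ^ (n - 2)"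
    proof -
      have "(\<Prod>v\<in>{1..n}. card (if v = 1 \<or> v = n then {a} else {1..k} - {a})) = (k - 1) ^ (n - 2)"
        using a n2 by (intro prod_mid[OF n2]) auto
      thus ?thesis by (subst card_PiE) auto
    qed
  qed simp
  finally show ?thesis by simp
qed

lemma card_diff:
  assumes n2: "n \<ge> 2"
  shows "card (\<Union>a\<in>{1..k}. \<Union>b\<in>{1..k} - {a}. PiE {1..n} (\<lambda>v. if v = 1 then {a} else if v = n then {b} else {1..k}))
     = k ^ (n - 1) * (k - 1)"
proof -
  have inner: "card (\<Union>b\<in>{1..k} - {a}. PiE {1..n} (\<lambda>v. if v = 1 then {a} else if v = n then {b} else {1..k}))
     = (k - 1) * k ^ (n - 2)" if a: "a \<in> {1..k}" for a
  proof -
    have "card (\<Union>b\<in>{1..k} - {a}. PiE {1..n} (\<lambda>v. if v = 1 then {a} else if v = n then {b} else {1..k}))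
      = (\<Sum>b\<in>{1..k} - {a}. card (PiE {1..n} (\<lambda>v. if v = 1 then {a} else if v = n then {b} else {1..k})))"
    proof (rule card_UN_disjoint)
      show "\<forall>i\<in>{1..k} - {a}. \<forall>j\<in>{1..k} - {a}. i \<noteq> j \<longrightarrow>
        PiE {1..n} (\<lambda>v. if v = 1 then {a} else if v = n then {i} else {1..k}) \<inter>
        PiE {1..n} (\<lambda>v. if v = 1 then {a} else if v = n then {j} else {1..k}) = {}"
      proof (intro ballI impI equalityI subsetI)
        fix i j c assume ij: "i \<noteq> j" and c: "c \<in> PiE {1..n} (\<lambda>v. if v = 1 then {a} else if v = n then {i} else {1..k}) \<inter>
          PiE {1..n} (\<lambda>v. if v = 1 then {a} else if v = n then {j} else {1..k})"
        hence "c n = i" "c n = j" using n2 PiE_mem[OF IntD1[OF c], of n] PiE_mem[OF IntD2[OF c], of n] by auto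
        thus "c \<in> {}" using ij by simp
      qed auto
    qed (auto intro!: finite_PiE)
    also have "\<dots> = (\<Sum>b\<in>{1..k} - {a}. k ^ (n - 2))"
    proof (rule sum.cong)
      fix b assume b: "b \<in> {1..k} - {a}"
      show "card (PiE {1..n} (\<lambda>v. if v = 1 then {a} else if v = n then {b} else {1..k})) = k ^ (n - 2)"
      proof -
        have "(\<Prod>v\<in>{1..n}. card (if v = 1 then {a} else if v = n then {b} else {1..k})) = k ^ (n - 2)"
          using b n2 by (intro prod_mid[OF n2]) auto
        thus ?thesis by (subst card_PiE) auto
      qed
    qed simp
    finally show ?thesis using a by simp
  qed
  have "card (\<Union>a\<in>{1..k}. \<Union>b\<in>{1..k} - {a}. PiE {1..n} (\<lambda>v. if v = 1 then {a} else if v = n then {b} else {1..k}))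
     = (\<Sum>a\<in>{1..k}. card (\<Union>b\<in>{1..k} - {a}. PiE {1..n} (\<lambda>v. if v = 1 then {a} else if v = n then {b} else {1..k})))"
  proof (rule card_UN_disjoint)
    show "\<forall>i\<in>{1..k}. \<forall>j\<in>{1..k}. i \<noteq> j \<longrightarrow>
      (\<Union>b\<in>{1..k} - {i}. PiE {1..n} (\<lambda>v. if v = 1 then {i} else if v = n then {b} else {1..k})) \<inter>
      (\<Union>b\<in>{1..k} - {j}. PiE {1..n} (\<lambda>v. if v = 1 then {j} else if v = n then {b} else {1..k})) = {}"
    proof (intro ballI impI equalityI subsetI)
      fix i j c assume ij: "i \<noteq> j" and c: "c \<in> (\<Union>b\<in>{1..k} - {i}. PiE {1..n} (\<lambda>v. if v = 1 then {i} else if v = n then {b} else {1..k})) \<inter>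
      (\<Union>b\<in>{1..k} - {j}. PiE {1..n} (\<lambda>v. if v = 1 then {j} else if v = n then {b} else {1..k}))"
      then obtain b1 b2 where
        "c \<in> PiE {1..n} (\<lambda>v. if v = 1 then {i} else if v = n then {b1} else {1..k})"
        "c \<in> PiE {1..n} (\<lambda>v. if v = 1 then {j} else if v = n then {b2} else {1..k})" by blast
      hence "c 1 = i" "c 1 = j" using n2 PiE_mem[of c _ _ 1] by fastforce+
      thus "c \<in> {}" using ij by simp
    qed auto
  qed (auto intro!: finite_PiE)
  also have "\<dots> = (\<Sum>a\<in>{1..k}. (k - 1) * k ^ (n - 2))"
    by (rule sum.cong) (rule refl, rule inner)
  also have "\<dots> = k ^ (n - 1) * (k - 1)"
  proof -
    have "n - 1 = Suc (n - 2)" using n2 by simp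
    thus ?thesis by simp
  qed
  finally show ?thesis .
qed

theorem mainTheorem10:
  fixes n k :: nat
  assumes "n \<ge> 2" and "k \<ge> 1"
  shows "P_same (Dn_vertices n) (Dn_arcs n) 1 n k = k * (k - 1) ^ (n - 2) \<and>
         P_diff (Dn_vertices n) (Dn_arcs n) 1 n k = k ^ (n - 1) * (k - 1) \<and>
         P_chrom (Dn_vertices n) (Dn_arcs n) k = k * (k - 1) ^ (n - 2) + k ^ (n - 1) * (k - 1)"
proof -
  let ?P = "proper_colorings (Dn_vertices n) (Dn_arcs n) k"
  have s: "P_same (Dn_vertices n) (Dn_arcs n) 1 n k = k * (k - 1) ^ (n - 2)"
    unfolding P_same_def using same_eq[OF assms(1)] card_same[OF assms(1)] by simp
  have d: "P_diff (Dn_vertices n) (Dn_arcs n) 1 n k = k ^ (n - 1) * (k - 1)"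
    unfolding P_diff_def using diff_eq[OF assms(1)] card_diff[OF assms(1)] by simp
  have fin: "finite ?P"
    by (rule finite_subset[of _ "{1..n} \<rightarrow>\<^sub>E {1..k}"])
       (auto simp: proper_colorings_def Dn_vertices_def intro: finite_PiE)
  have "?P = {c \<in> ?P. c 1 = c n} \<union> {c \<in> ?P. c 1 \<noteq> c n}" by blast
  hence "card ?P = card {c \<in> ?P. c 1 = c n} + card {c \<in> ?P. c 1 \<noteq> c n}"
    using fin by (metis (no_types, lifting) card_Un_disjoint finite_Un disjoint_iff mem_Collect_eq)
  hence "P_chrom (Dn_vertices n) (Dn_arcs n) k = P_same (Dn_vertices n) (Dn_arcs n) 1 n k + P_diff (Dn_vertices n) (Dn_arcs n) 1 n k"
    unfolding P_chrom_def P_same_def P_diff_def by simp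
  thus ?thesis using s d by simp
qed

end
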